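(* Consider a controlled Markov chain with finite state space $X$, finite action set $U$, unknown transition probabilities $p$ and rewards $r(x,u)\in(0,1]$, controlled by the RBMLE algorithm described in the context, with parameters $a>0$, $b>2$. Let $\mathcal{G}_1:=\{\omega: p\in\mathcal{C}(t)\ \forall t\in\mathbb{N}\}$. Then on $\mathcal{G}_1$, for every optimal policy $\pi^{\star}\in\Pi^{\star}(p)$, \[ I_k(\pi^{\star})\ge\alpha(\tau_k)(1-\gamma)J^{\star}(p)\quad\forall k=1,2,\dots,K, \] where $\gamma:=\frac{|X|^3|U|}{2a\,p_{\min}J^{\star}(p)}$ and $K$ is the number of episodes considered.
   Context: $\Pi_{sd}$: stationary deterministic policies $X\to U$. $J(\theta,\pi)$: long-term average reward under transition kernel $\theta$ and policy $\pi$; $J^{\star}(\theta)=\max_{\pi\in\Pi_{sd}}J(\theta,\pi)$; $\Pi^{\star}(p)=\arg\max_{\pi\in\Pi_{sd}}J(p,\pi)$. Known information: the zero pattern of $p$ and $p_{\min}:=\min_{(x,y,u):p(x,y,u)>0}p(x,y,u)$. $\Theta$: all $\theta\in[0,1]^{|X|\times|X|\times|U|}$ with $\theta(x,y,u)=0$ whenever $p(x,y,u)=0$ and $\sum_y\theta(x,y,u)=1$; $\theta(x,u)=\{\theta(x,y,u)\}_y$. $KL(p_1,p_2)=\sum_xp_1(x)\log\frac{p_1(x)}{p_2(x)}$. $n(x,u;t)$: number of times action $u$ was applied in state $x$ up to time $t$; $n(x,y,u;t)$: number of those followed by a move to $y$; $\hat p(x,y,u;t)=\frac{n(x,y,u;t)}{n(x,u;t)\vee1}$.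 $d_1(x,u;t)=\sqrt{\log(t^b|X|^2|U|)/n(x,u;t)}$ and $\mathcal{C}(t)=\{\theta\in\Theta:|\theta(x,y,u)-\hat p(x,y,u;t)|\le d_1(x,u;t)\ \forall(x,y,u)\}$. Episodes $\mathcal{E}_k=[\tau_k,\tau_{k+1}-1]$, $|\mathcal{E}_k|=2^k$; $n_k=n(\cdot;\tau_k)$, $\hat p_k=\hat p(\tau_k)$; $\alpha(t)=a\log(t^b|X|^2|U|)$. Index: $I_k(\pi)=\max_{\theta\in\Theta}\{\alpha(\tau_k)J(\theta,\pi)-\sum_{(x,u)}n_k(x,u)KL(\hat p_k(x,u),\theta(x,u))\}$; RBMLE applies $\pi_k\in\arg\max_{\pi\in\Pi_{sd}}I_k(\pi)$ during episode $k$. *)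

theory Defs
  imports Complex_Main
begin

text \<open>A transition kernel theta is a function theta x y u = probability of moving from x to y
  under action u. Policies in Pi_sd are functions 'x => 'u.\<close>

fun mdist :: "('x::finite \<Rightarrow> 'x \<Rightarrow> 'u \<Rightarrow> real) \<Rightarrow> ('x \<Rightarrow> 'u) \<Rightarrow> 'x \<Rightarrow> nat \<Rightarrow> 'x \<Rightarrow> real" where
  "mdist \<theta> \<pi> x0 0 y = (if y = x0 then 1 else 0)"
| "mdist \<theta> \<pi> x0 (Suc t) y = (\<Sum>z\<in>UNIV. mdist \<theta> \<pi> x0 t z * \<theta> z y (\<pi> z))"

text \<open>Long-term average reward J(theta, pi) from initial state x0 (Cesaro limit, which
  exists for finite chains).\<close>
definition avg_reward :: "('x::finite \<Rightarrow> 'u \<Rightarrow> real) \<Rightarrow> ('x \<Rightarrow> 'x \<Rightarrow> 'u \<Rightarrow> real) \<Rightarrow> ('x \<Rightarrow> 'u) \<Rightarrow> 'x \<Rightarrow> real" where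
  "avg_reward r \<theta> \<pi> x0 =
     lim (\<lambda>T. (\<Sum>t<T. \<Sum>y\<in>UNIV. mdist \<theta> \<pi> x0 t y * r y (\<pi> y)) / real T)"

definition opt_gain :: "('x::finite \<Rightarrow> 'u::finite \<Rightarrow> real) \<Rightarrow> ('x \<Rightarrow> 'x \<Rightarrow> 'u \<Rightarrow> real) \<Rightarrow> 'x \<Rightarrow> real" where
  "opt_gain r \<theta> x0 = Max ((\<lambda>\<pi>. avg_reward r \<theta> \<pi> x0) ` UNIV)"

definition opt_policies :: "('x::finite \<Rightarrow> 'u::finite \<Rightarrow> real) \<Rightarrow> ('x \<Rightarrow> 'x \<Rightarrow> 'u \<Rightarrow> real) \<Rightarrow> 'x \<Rightarrow> ('x \<Rightarrow> 'u) set" where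
  "opt_policies r \<theta> x0 = {\<pi>. avg_reward r \<theta> \<pi> x0 = opt_gain r \<theta> x0}"

definition pmin :: "('x \<Rightarrow> 'x \<Rightarrow> 'u \<Rightarrow> real) \<Rightarrow> real" where
  "pmin p = Min {p x y u | x y u. p x y u > 0}"

text \<open>Theta: kernels with the (known) zero pattern of p.\<close>
definition Theta :: "('x::finite \<Rightarrow> 'x \<Rightarrow> 'u \<Rightarrow> real) \<Rightarrow> ('x \<Rightarrow> 'x \<Rightarrow> 'u \<Rightarrow> real) set" where
  "Theta p = {\<theta>. (\<forall>x y u. 0 \<le> \<theta> x y u \<and> \<theta> x y u \<le> 1 \<and> (p x y u = 0 \<longrightarrow> \<theta> x y u = 0))
                 \<and> (\<forall>x u. (\<Sum>y\<in>UNIV. \<theta> x y u) = 1)}"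

definition is_kernel :: "('x::finite \<Rightarrow> 'x \<Rightarrow> 'u \<Rightarrow> real) \<Rightarrow> bool" where
  "is_kernel p \<longleftrightarrow> (\<forall>x y u. 0 \<le> p x y u) \<and> (\<forall>x u. (\<Sum>y\<in>UNIV. p x y u) = 1)"

definition KL :: "('x::finite \<Rightarrow> real) \<Rightarrow> ('x \<Rightarrow> real) \<Rightarrow> real" where
  "KL q1 q2 = (\<Sum>y\<in>UNIV. q1 y * ln (q1 y / q2 y))"

text \<open>Counts along a trajectory (time starts at 1): n(x,u;t) counts times s with 1 <= s < t,
  i.e. the transitions observed before time t.\<close>
definition cnt :: "(nat \<Rightarrow> 'x) \<Rightarrow> (nat \<Rightarrow> 'u) \<Rightarrow> 'x \<Rightarrow> 'u \<Rightarrow> nat \<Rightarrow> nat" where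
  "cnt xs us x u t = card {s \<in> {1..<t}. xs s = x \<and> us s = u}"

definition cnt3 :: "(nat \<Rightarrow> 'x) \<Rightarrow> (nat \<Rightarrow> 'u) \<Rightarrow> 'x \<Rightarrow> 'x \<Rightarrow> 'u \<Rightarrow> nat \<Rightarrow> nat" where
  "cnt3 xs us x y u t = card {s \<in> {1..<t}. xs s = x \<and> us s = u \<and> xs (Suc s) = y}"

definition phat :: "(nat \<Rightarrow> 'x) \<Rightarrow> (nat \<Rightarrow> 'u) \<Rightarrow> 'x \<Rightarrow> 'x \<Rightarrow> 'u \<Rightarrow> nat \<Rightarrow> real" where
  "phat xs us x y u t = real (cnt3 xs us x y u t) / real (max (cnt xs us x u t) 1)"

text \<open>Confidence set C(t); when n(x,u;t) = 0 the radius d_1 is infinite (no constraint).\<close>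
definition conf_set :: "real \<Rightarrow> ('x::finite \<Rightarrow> 'x \<Rightarrow> 'u::finite \<Rightarrow> real) \<Rightarrow> (nat \<Rightarrow> 'x) \<Rightarrow> (nat \<Rightarrow> 'u) \<Rightarrow> nat
     \<Rightarrow> ('x \<Rightarrow> 'x \<Rightarrow> 'u \<Rightarrow> real) set" where
  "conf_set b p xs us t = {\<theta> \<in> Theta p. \<forall>x y u. cnt xs us x u t > 0 \<longrightarrow>
      \<bar>\<theta> x y u - phat xs us x y u t\<bar>
        \<le> sqrt (ln (real t powr b * real (card (UNIV :: 'x set))^2 * real (card (UNIV :: 'u set))) / real (cnt xs us x u t))}"

text \<open>Episode start times: tau_1 = 1, |E_k| = 2^k, so tau_k = 2^k - 1.\<close>
definition tau :: "nat \<Rightarrow> nat" where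
  "tau k = 2^k - 1"

definition alpha :: "real \<Rightarrow> real \<Rightarrow> nat \<Rightarrow> nat \<Rightarrow> nat \<Rightarrow> real" where
  "alpha a b nX nU t = a * ln (real t powr b * real nX ^ 2 * real nU)"

text \<open>The maximum over Theta is rendered as a supremum over those theta
  for which every KL term is finite (theta > 0 wherever the empirical estimate is positive);
  kernels with an infinite KL term give value -infinity and do not affect the maximum.\<close>
definition rb_index :: "('x::finite \<Rightarrow> 'u::finite \<Rightarrow> real) \<Rightarrow> ('x \<Rightarrow> 'x \<Rightarrow> 'u \<Rightarrow> real)
     \<Rightarrow> (nat \<Rightarrow> 'x) \<Rightarrow> (nat \<Rightarrow> 'u) \<Rightarrow> real \<Rightarrow> real \<Rightarrow> nat \<Rightarrow> ('x \<Rightarrow> 'u) \<Rightarrow> real" where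
  "rb_index r p xs us a b k \<pi> =
     Sup {alpha a b (card (UNIV :: 'x set)) (card (UNIV :: 'u set)) (tau k) * avg_reward r \<theta> \<pi> (xs 1)
          - (\<Sum>x\<in>UNIV. \<Sum>u\<in>UNIV. real (cnt xs us x u (tau k))
               * KL (\<lambda>y. phat xs us x y u (tau k)) (\<lambda>y. \<theta> x y u))
         | \<theta>. \<theta> \<in> Theta p \<and> (\<forall>x y u. phat xs us x y u (tau k) > 0 \<longrightarrow> \<theta> x y u > 0)}"

text \<open>Sample paths of the RBMLE algorithm: every observed transition has positive probability,
  and during episode k the action is pi_k(x_t) with pi_k maximizing I_k.\<close>
definition rbmle_path :: "('x::finite \<Rightarrow> 'u::finite \<Rightarrow> real) \<Rightarrow> ('x \<Rightarrow> 'x \<Rightarrow> 'u \<Rightarrow> real)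
     \<Rightarrow> real \<Rightarrow> real \<Rightarrow> (nat \<Rightarrow> 'x) \<Rightarrow> (nat \<Rightarrow> 'u) \<Rightarrow> bool" where
  "rbmle_path r p a b xs us \<longleftrightarrow>
     (\<forall>t\<ge>1. p (xs t) (xs (Suc t)) (us t) > 0) \<and>
     (\<exists>pol :: nat \<Rightarrow> 'x \<Rightarrow> 'u. \<forall>k\<ge>1.
        (\<forall>\<pi>. rb_index r p xs us a b k \<pi> \<le> rb_index r p xs us a b k (pol k)) \<and>
        (\<forall>t\<in>{tau k..<tau (Suc k)}. us t = pol k (xs t)))"

end

theory Submission
  imports Defs "HOL-Analysis.Analysis"
begin

definition mm :: "('x::finite \<Rightarrow> 'x \<Rightarrow> real) \<Rightarrow> ('x \<Rightarrow> 'x \<Rightarrow> real) \<Rightarrow> 'x \<Rightarrow> 'x \<Rightarrow> real" where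
  "mm A B x y = (\<Sum>z\<in>UNIV. A x z * B z y)"

definition idm :: "'x \<Rightarrow> 'x \<Rightarrow> real" where "idm x y = (if y = x then 1 else 0)"

fun mpow :: "('x::finite \<Rightarrow> 'x \<Rightarrow> real) \<Rightarrow> nat \<Rightarrow> 'x \<Rightarrow> 'x \<Rightarrow> real" where
  "mpow P 0 = idm"
| "mpow P (Suc t) = mm (mpow P t) P"

lemma mm_assoc: "mm (mm A B) C = mm A (mm B C)"
  by (auto simp: mm_def fun_eq_iff sum_distrib_left sum_distrib_right mult.assoc intro: sum.swap)

lemma delta1: "(\<Sum>z\<in>UNIV. (if z = (x::'x::finite) then 1 else 0) * f z) = (f x::real)"
  by (simp add: if_distrib[of "\<lambda>c. c * f _"] cong: if_cong)
lemma delta2: "(\<Sum>z\<in>UNIV. f z * (if (x::'x::finite) = z then 1 else 0)) = (f x::real)"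
  by (simp add: if_distrib[of "\<lambda>c. f _ * c"] cong: if_cong)
lemma mm_id1[simp]: "mm idm A = A" by (simp add: mm_def idm_def fun_eq_iff delta1)
lemma mm_id2[simp]: "mm A idm = A" by (simp add: mm_def idm_def fun_eq_iff delta2)

lemma mpow_comm: "mm P (mpow P t) = mm (mpow P t) P"
proof (induction t)
  case (Suc t)
  have "mm P (mpow P (Suc t)) = mm (mm P (mpow P t)) P" by (simp add: mm_assoc)
  also have "\<dots> = mm (mpow P (Suc t)) P" using Suc by simp
  finally show ?case .
qed simp

lemma mpow_Suc': "mpow P (Suc t) = mm P (mpow P t)" by (simp add: mpow_comm)

lemma mdist_mpow: "Defs.mdist \<theta> \<pi> x0 t y = mpow (\<lambda>z y. \<theta> z y (\<pi> z)) t x0 y"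
  by (induction t arbitrary: y) (auto simp: mm_def idm_def)

locale stoch =
  fixes P :: "'x::finite \<Rightarrow> 'x \<Rightarrow> real"
  assumes nn: "\<And>x y. 0 \<le> P x y" and rs: "\<And>x. (\<Sum>y\<in>UNIV. P x y) = 1"
begin

lemma mpow_nn: "0 \<le> mpow P t x y"
  by (induction t arbitrary: y) (auto simp: mm_def idm_def nn intro!: sum_nonneg)

lemma mpow_rs: "(\<Sum>y\<in>UNIV. mpow P t x y) = 1"
proof (induction t)
  case 0 then show ?case by (simp add: idm_def)
next
  case (Suc t)
  have "(\<Sum>y\<in>UNIV. mpow P (Suc t) x y) = (\<Sum>z\<in>UNIV. mpow P t x z * (\<Sum>y\<in>UNIV. P z y))"
    by (simp add: mm_def sum_distrib_left) (rule sum.swap)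
  also have "\<dots> = 1" using Suc by (simp add: rs)
  finally show ?case .
qed

lemma mpow_le1: "mpow P t x y \<le> 1"
proof -
  have "mpow P t x y \<le> (\<Sum>y\<in>UNIV. mpow P t x y)"
    by (rule member_le_sum) (auto simp: mpow_nn)
  then show ?thesis by (simp add: mpow_rs)
qed

definition A :: "nat \<Rightarrow> 'x \<Rightarrow> 'x \<Rightarrow> real" where
  "A T x y = (\<Sum>t<T. mpow P t x y) / real T"

lemma A_bounds: "0 \<le> A T x y \<and> A T x y \<le> 1"
proof -
  have "(\<Sum>t<T. mpow P t x y) \<le> (\<Sum>t<T. 1)" by (rule sum_mono) (rule mpow_le1)
  then show ?thesis unfolding A_def
    by (auto simp: mpow_nn sum_nonneg divide_le_eq_1)
qed

lemma AP: "mm (A T) P x y - A T x y = (mpow P T x y - idm x y) / real T"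
proof -
  have "mm (A T) P x y = (\<Sum>t<T. mm (mpow P t) P x y) / real T"
    by (simp add: A_def mm_def sum_divide_distrib sum_distrib_right) (rule sum.swap)
  also have "\<dots> = (\<Sum>t<T. mpow P (Suc t) x y) / real T" by simp
  finally have "mm (A T) P x y - A T x y = ((\<Sum>t<T. mpow P (Suc t) x y) - (\<Sum>t<T. mpow P t x y)) / real T"
    by (simp add: A_def diff_divide_distrib)
  also have "\<dots> = (mpow P T x y - idm x y) / real T"
    by (simp only: sum_subtractf[symmetric] sum_lessThan_telescope[of "\<lambda>t. mpow P t x y"] mpow.simps(1))
  finally show ?thesis .
qed

lemma PA: "mm P (A T) x y - A T x y = (mpow P T x y - idm x y) / real T"
proof -
  have "mm P (A T) x y = (\<Sum>t<T. mm P (mpow P t) x y) / real T"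
    by (simp add: A_def mm_def sum_divide_distrib sum_distrib_left mult.left_commute) (rule sum.swap)
  also have "\<dots> = (\<Sum>t<T. mpow P (Suc t) x y) / real T" by (simp only: mpow_Suc')
  finally have "mm P (A T) x y - A T x y = ((\<Sum>t<T. mpow P (Suc t) x y) - (\<Sum>t<T. mpow P t x y)) / real T"
    by (simp add: A_def diff_divide_distrib)
  also have "\<dots> = (mpow P T x y - idm x y) / real T"
    by (simp only: sum_subtractf[symmetric] sum_lessThan_telescope[of "\<lambda>t. mpow P t x y"] mpow.simps(1))
  finally show ?thesis .
qed

lemma diff_lim: "(\<lambda>T. (mpow P T x y - idm x y) / real T) \<longlonglongrightarrow> 0"
proof (rule Lim_null_comparison[where g="\<lambda>T. 2 / real T"])
  show "\<forall>\<^sub>F T in sequentially. norm ((mpow P T x y - idm x y) / real T) \<le> 2 / real T"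
  proof (intro always_eventually allI)
    fix T
    have "\<bar>mpow P T x y - idm x y\<bar> \<le> 2"
      using mpow_nn[of T x y] mpow_le1[of T x y] by (auto simp: idm_def)
    then show "norm ((mpow P T x y - idm x y) / real T) \<le> 2 / real T"
      by (simp add: divide_right_mono)
  qed
  show "(\<lambda>T. 2 / real T) \<longlonglongrightarrow> 0" by real_asymp
qed

lemma sub_fix:
  assumes f: "strict_mono f" and lim: "\<And>x y. (\<lambda>n. A (f n) x y) \<longlonglongrightarrow> Q x y"
  shows "mm Q P = Q" "mm P Q = Q"
proof -
  show "mm Q P = Q"
  proof (intro ext)
    fix x y
    have 1: "(\<lambda>n. mm (A (f n)) P x y - A (f n) x y) \<longlonglongrightarrow> mm Q P x y - Q x y"
      unfolding mm_def by (intro tendsto_intros lim)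
    have "((\<lambda>T. (mpow P T x y - idm x y) / real T) \<circ> f) \<longlonglongrightarrow> 0"
      by (rule LIMSEQ_subseq_LIMSEQ[OF diff_lim f])
    then have 2: "(\<lambda>n. mm (A (f n)) P x y - A (f n) x y) \<longlonglongrightarrow> 0"
      by (simp add: AP o_def)
    show "mm Q P x y = Q x y" using LIMSEQ_unique[OF 1 2] by simp
  qed
  show "mm P Q = Q"
  proof (intro ext)
    fix x y
    have 1: "(\<lambda>n. mm P (A (f n)) x y - A (f n) x y) \<longlonglongrightarrow> mm P Q x y - Q x y"
      unfolding mm_def by (intro tendsto_intros lim)
    have "((\<lambda>T. (mpow P T x y - idm x y) / real T) \<circ> f) \<longlonglongrightarrow> 0"
      by (rule LIMSEQ_subseq_LIMSEQ[OF diff_lim f])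
    then have 2: "(\<lambda>n. mm P (A (f n)) x y - A (f n) x y) \<longlonglongrightarrow> 0"
      by (simp add: PA o_def)
    show "mm P Q x y = Q x y" using LIMSEQ_unique[OF 1 2] by simp
  qed
qed

lemma fixQ1:
  assumes "mm Q P = Q" "T \<ge> 1"
  shows "mm Q (A T) = Q"
proof -
  have pw: "mm Q (mpow P t) = Q" for t
  proof (induction t)
    case (Suc t)
    then show ?case using assms(1) by (simp flip: mm_assoc)
  qed simp
  show ?thesis
  proof (intro ext)
    fix x y
    have "mm Q (A T) x y = (\<Sum>t<T. mm Q (mpow P t) x y) / real T"
      by (simp add: A_def mm_def sum_divide_distrib sum_distrib_left mult.left_commute) (rule sum.swap)
    also have "\<dots> = Q x y" using assms(2) by (simp add: pw)
    finally show "mm Q (A T) x y = Q x y" .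
  qed
qed

lemma fixQ2:
  assumes "mm P Q = Q" "T \<ge> 1"
  shows "mm (A T) Q = Q"
proof -
  have pw: "mm (mpow P t) Q = Q" for t
  proof (induction t)
    case (Suc t)
    then show ?case using assms(1) by (simp add: mpow_Suc' mm_assoc del: mpow.simps)
  qed simp
  show ?thesis
  proof (intro ext)
    fix x y
    have "mm (A T) Q x y = (\<Sum>t<T. mm (mpow P t) Q x y) / real T"
      by (simp add: A_def mm_def sum_divide_distrib sum_distrib_right) (rule sum.swap)
    also have "\<dots> = Q x y" using assms(2) by (simp add: pw)
    finally show "mm (A T) Q x y = Q x y" .
  qed
qed

lemma uniq:
  assumes f: "strict_mono f" and limf: "\<And>x y. (\<lambda>n. A (f n) x y) \<longlonglongrightarrow> Q1 x y"
    and g: "strict_mono g" and limg: "\<And>x y. (\<lambda>n. A (g n) x y) \<longlonglongrightarrow> Q2 x y"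
  shows "Q1 = Q2"
proof (intro ext)
  fix x y
  have ev: "\<forall>\<^sub>F n in sequentially. h n \<ge> 1" if "strict_mono h" for h :: "nat \<Rightarrow> nat"
    using seq_suble[OF that] by (intro eventually_sequentiallyI[of 1]) (meson le_trans)
  have a: "(\<lambda>n. mm Q1 (A (g n)) x y) \<longlonglongrightarrow> mm Q1 Q2 x y"
    unfolding mm_def by (intro tendsto_intros limg)
  have "\<forall>\<^sub>F n in sequentially. mm Q1 (A (g n)) x y = Q1 x y"
    using ev[OF g] by eventually_elim (simp add: fixQ1[OF sub_fix(1)[OF f limf]])
  then have "(\<lambda>n. mm Q1 (A (g n)) x y) \<longlonglongrightarrow> Q1 x y"
    by (rule tendsto_eventually)
  with a have e1: "mm Q1 Q2 x y = Q1 x y" using LIMSEQ_unique by blast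
  have b: "(\<lambda>n. mm (A (f n)) Q2 x y) \<longlonglongrightarrow> mm Q1 Q2 x y"
    unfolding mm_def by (intro tendsto_intros limf)
  have "\<forall>\<^sub>F n in sequentially. mm (A (f n)) Q2 x y = Q2 x y"
    using ev[OF f] by eventually_elim (simp add: fixQ2[OF sub_fix(2)[OF g limg]])
  then have "(\<lambda>n. mm (A (f n)) Q2 x y) \<longlonglongrightarrow> Q2 x y"
    by (rule tendsto_eventually)
  with b have e2: "mm Q1 Q2 x y = Q2 x y" using LIMSEQ_unique by blast
  show "Q1 x y = Q2 x y" using e1 e2 by simp
qed

lemma subsub: fixes h :: "nat \<Rightarrow> nat" shows "\<exists>r Q. strict_mono r \<and> (\<forall>x y. (\<lambda>n. A (h (r n)) x y) \<longlonglongrightarrow> Q x y)"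
proof -
  define V where "V n = ((\<chi> i. A (h n) (fst i) (snd i)) :: real^('x \<times> 'x))" for n
  have "norm (V n) \<le> real CARD('x \<times> 'x)" for n
  proof -
    have "norm (V n) \<le> (\<Sum>i\<in>UNIV. \<bar>V n $ i\<bar>)" by (rule norm_le_l1_cart)
    also have "\<dots> \<le> (\<Sum>i\<in>(UNIV::('x\<times>'x) set). 1)"
      by (intro sum_mono) (simp add: V_def A_bounds abs_le_iff order_trans[OF _ A_bounds[THEN conjunct2]] A_bounds[THEN conjunct1] A_bounds[THEN conjunct2])
    finally show ?thesis by simp
  qed
  then have "bounded (range V)" by (auto simp: bounded_iff)
  then obtain l r where r: "strict_mono r" and l: "(V \<circ> r) \<longlonglongrightarrow> l"
    using bounded_imp_convergent_subsequence[OF \<open>bounded (range V)\<close>] by blast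
  have "(\<lambda>n. A (h (r n)) x y) \<longlonglongrightarrow> l $ (x, y)" for x y
    using tendsto_vec_nth[OF l, of "(x,y)"] by (simp add: V_def o_def)
  then show ?thesis using r by (intro exI[of _ r] exI[of _ "\<lambda>x y. l $ (x, y)"]) auto
qed

lemma A_conv: "convergent (\<lambda>T. A T x y)"
proof -
  obtain r0 Q0 where r0: "strict_mono r0" and Q0: "\<And>x y. (\<lambda>n. A (id (r0 n)) x y) \<longlonglongrightarrow> Q0 x y"
    using subsub[of id] by blast
  have "(\<lambda>T. A T x y) \<longlonglongrightarrow> Q0 x y"
  proof (rule ccontr)
    assume "\<not> ?thesis"
    then obtain e where e: "e > 0" and fr: "\<not> (\<forall>\<^sub>F T in sequentially. dist (A T x y) (Q0 x y) < e)"
      unfolding tendsto_iff by blast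
    let ?S = "{T. e \<le> dist (A T x y) (Q0 x y)}"
    have "frequently (\<lambda>T. e \<le> dist (A T x y) (Q0 x y)) cofinite"
      using fr unfolding cofinite_eq_sequentially frequently_def by (simp add: not_le)
    then have inf: "infinite ?S" by (simp add: frequently_cofinite)
    define h where "h = enumerate ?S"
    have hm: "strict_mono h" unfolding h_def by (rule strict_mono_enumerate[OF inf])
    have hS: "h n \<in> ?S" for n unfolding h_def by (rule enumerate_in_set[OF inf])
    obtain r Q where r: "strict_mono r" and Q: "\<And>x y. (\<lambda>n. A (h (r n)) x y) \<longlonglongrightarrow> Q x y"
      using subsub[of h] by blast
    have "Q = Q0"
      by (rule uniq[of "h \<circ> r" _ r0]) (use Q Q0 r0 strict_mono_o[OF hm r] in auto)
    have "(\<lambda>n. dist (A (h (r n)) x y) (Q0 x y)) \<longlonglongrightarrow> dist (Q x y) (Q0 x y)"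
      by (intro tendsto_intros Q)
    moreover have "\<forall>n. e \<le> dist (A (h (r n)) x y) (Q0 x y)" using hS by auto
    ultimately have "e \<le> dist (Q x y) (Q0 x y)" 
      by (intro LIMSEQ_le_const) auto
    with \<open>Q = Q0\<close> e show False by simp
  qed
  then show ?thesis by (rule convergentI)
qed

end
lemma avg_bounds:
  fixes \<theta> :: "'x::finite \<Rightarrow> 'x \<Rightarrow> 'u::finite \<Rightarrow> real" and r :: "'x \<Rightarrow> 'u \<Rightarrow> real"
  assumes nn: "\<And>x y u. 0 \<le> \<theta> x y u" and rs: "\<And>x u. (\<Sum>y\<in>UNIV. \<theta> x y u) = 1"
    and rew: "\<And>x u. 0 < r x u \<and> r x u \<le> 1"
  shows "0 < avg_reward r \<theta> \<pi> x0 \<and> avg_reward r \<theta> \<pi> x0 \<le> 1"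
proof -
  define P where "P z y = \<theta> z y (\<pi> z)" for z y
  interpret stoch P by unfold_locales (auto simp: P_def nn rs)
  define cr where "cr = Min (range (\<lambda>(x, u). r x u))"
  have cr_pos: "cr > 0" unfolding cr_def using rew by (subst Min_gr_iff) auto
  have cr_le: "cr \<le> r x u" for x u unfolding cr_def by (rule Min_le) auto
  define g where "g t = (\<Sum>y\<in>UNIV. Defs.mdist \<theta> \<pi> x0 t y * r y (\<pi> y))" for t
  have g_eq: "g t = (\<Sum>y\<in>UNIV. mpow P t x0 y * r y (\<pi> y))" for t
    by (simp add: g_def mdist_mpow P_def[abs_def])
  have g_le: "g t \<le> 1" for t
  proof -
    have "g t \<le> (\<Sum>y\<in>UNIV. mpow P t x0 y * 1)" unfolding g_eq
      by (intro sum_mono mult_left_mono) (auto simp: rew mpow_nn less_imp_le)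
    then show ?thesis by (simp add: mpow_rs)
  qed
  have g_ge: "cr \<le> g t" for t
  proof -
    have "(\<Sum>y\<in>UNIV. mpow P t x0 y * cr) \<le> g t" unfolding g_eq
      by (intro sum_mono mult_left_mono) (auto simp: cr_le mpow_nn)
    then show ?thesis by (simp add: mpow_rs flip: sum_distrib_right)
  qed
  define s where "s T = (\<Sum>t<T. g t) / real T" for T
  have s_eq: "s T = (\<Sum>y\<in>UNIV. A T x0 y * r y (\<pi> y))" for T
    unfolding s_def A_def g_eq
    by (simp add: sum_divide_distrib sum_distrib_right) (rule sum.swap)
  have "convergent s"
  proof -
    have "\<forall>y. \<exists>L. (\<lambda>T. A T x0 y) \<longlonglongrightarrow> L" using A_conv by (auto simp: convergent_def)
    then obtain L where L: "\<And>y. (\<lambda>T. A T x0 y) \<longlonglongrightarrow> L y" by metis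
    have "s \<longlonglongrightarrow> (\<Sum>y\<in>UNIV. L y * r y (\<pi> y))"
      unfolding s_eq[abs_def] by (intro tendsto_intros L)
    then show ?thesis by (rule convergentI)
  qed
  then have lim: "s \<longlonglongrightarrow> lim s" by (simp add: convergent_LIMSEQ_iff)
  have avg: "avg_reward r \<theta> \<pi> x0 = lim s"
    unfolding avg_reward_def s_def g_def ..
  have sb: "cr \<le> s T \<and> s T \<le> 1" if "T \<ge> 1" for T
  proof -
    have "(\<Sum>t<T. cr) \<le> (\<Sum>t<T. g t)" "(\<Sum>t<T. g t) \<le> (\<Sum>t<T. 1)"
      by (intro sum_mono g_ge g_le)+
    then show ?thesis using that unfolding s_def by (auto simp: field_simps)
  qed
  have "cr \<le> lim s" by (rule LIMSEQ_le_const[OF lim]) (use sb in auto)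
  moreover have "lim s \<le> 1" by (rule LIMSEQ_le_const2[OF lim]) (use sb in auto)
  ultimately show ?thesis using cr_pos avg by auto
qed


lemma cnt_sum: fixes xs :: "nat \<Rightarrow> 'x::finite" shows "(\<Sum>y\<in>UNIV. cnt3 xs us x y u t) = cnt xs us x u (t::nat)"
proof -
  let ?B = "\<lambda>y. {s \<in> {1..<t}. xs s = x \<and> us s = u \<and> xs (Suc s) = y}"
  have "{s \<in> {1..<t}. xs s = x \<and> us s = u} = (\<Union>y\<in>UNIV. ?B y)" by auto
  then have "cnt xs us x u t = card (\<Union>y\<in>UNIV. ?B y)" by (simp add: cnt_def)
  also have "\<dots> = (\<Sum>y\<in>UNIV. card (?B y))"
    by (rule card_UN_disjoint) auto
  finally show ?thesis by (simp add: cnt3_def)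
qed

lemma KL_upper:
  fixes ph q :: "'x::finite \<Rightarrow> real"
  assumes phn: "\<And>y. 0 \<le> ph y" and phs: "(\<Sum>y\<in>UNIV. ph y) = 1"
    and qs: "(\<Sum>y\<in>UNIV. q y) = 1" and pos: "\<And>y. ph y > 0 \<Longrightarrow> q y > 0"
    and qn: "\<And>y. 0 \<le> q y"
  shows "KL ph q \<le> (\<Sum>y\<in>UNIV. (if q y > 0 then (ph y - q y)^2 / q y else 0))"
proof -
  have t: "ph y * ln (ph y / q y) \<le> (if q y > 0 then (ph y - q y)^2 / q y else 0) + (ph y - q y)" for y
  proof (cases "ph y > 0")
    case True
    then have qp: "q y > 0" by (rule pos)
    have "ln (ph y / q y) \<le> ph y / q y - 1" using True qp by (intro ln_le_minus_one) simp
    then have "ph y * ln (ph y / q y) \<le> ph y * (ph y / q y - 1)"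
      using True by (intro mult_left_mono) auto
    also have "\<dots> = (ph y - q y)^2 / q y + (ph y - q y)" using qp
      by (simp add: field_simps power2_eq_square)
    finally show ?thesis using qp by simp
  next
    case False
    then have "ph y = 0" using phn[of y] by simp
    then show ?thesis using qn[of y] by (cases "q y > 0") (auto simp: power2_eq_square)
  qed
  have "KL ph q \<le> (\<Sum>y\<in>UNIV. (if q y > 0 then (ph y - q y)^2 / q y else 0) + (ph y - q y))"
    unfolding KL_def by (intro sum_mono t)
  also have "\<dots> = (\<Sum>y\<in>UNIV. (if q y > 0 then (ph y - q y)^2 / q y else 0))"
    by (simp add: sum.distrib sum_subtractf phs qs)
  finally show ?thesis .
qed

lemma KL_lower:
  fixes ph q :: "'x::finite \<Rightarrow> real"
  assumes phn: "\<And>y. 0 \<le> ph y" and pos: "\<And>y. ph y > 0 \<Longrightarrow> q y > 0"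
    and q1: "\<And>y. q y \<le> 1"
  shows "- real (card (UNIV :: 'x set)) \<le> KL ph q"
proof -
  have t: "-1 \<le> ph y * ln (ph y / q y)" for y
  proof (cases "ph y > 0")
    case True
    then have qp: "q y > 0" by (rule pos)
    have "ln (q y / ph y) \<le> q y / ph y - 1" using True qp by (intro ln_le_minus_one) simp
    then have "ph y * ln (q y / ph y) \<le> ph y * (q y / ph y - 1)"
      using True by (intro mult_left_mono) auto
    also have "\<dots> = q y - ph y" using True by (simp add: field_simps)
    finally have "ph y * ln (q y / ph y) \<le> 1" using q1[of y] True by linarith
    moreover have "ln (ph y / q y) = - ln (q y / ph y)" using True qp by (simp add: ln_div)
    ultimately show ?thesis by simp
  next
    case False
    then have "ph y = 0" using phn[of y] by simp
    then show ?thesis by simp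
  qed
  have "(\<Sum>y\<in>(UNIV::'x set). (-1::real)) \<le> KL ph q" unfolding KL_def by (rule sum_mono) (use t in simp)
  then show ?thesis by simp
qed

theorem lemma3:
  fixes p :: "'x::finite \<Rightarrow> 'x \<Rightarrow> 'u::finite \<Rightarrow> real"
    and r :: "'x \<Rightarrow> 'u \<Rightarrow> real"
    and a b :: real
    and xs :: "nat \<Rightarrow> 'x" and us :: "nat \<Rightarrow> 'u"
  assumes kernel: "is_kernel p"
    and rew: "\<And>x u. 0 < r x u \<and> r x u \<le> 1"
    and a_pos: "a > 0" and b_gt: "b > 2"
    and path: "rbmle_path r p a b xs us"
    and G1: "\<forall>t\<ge>1. p \<in> conf_set b p xs us t"
    and opt: "\<pi>s \<in> opt_policies r p (xs 1)"
    and k: "k \<ge> 1"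
  shows "rb_index r p xs us a b k \<pi>s
         \<ge> alpha a b (card (UNIV :: 'x set)) (card (UNIV :: 'u set)) (tau k)
           * (1 - real ((card (UNIV :: 'x set)))^3 * real ((card (UNIV :: 'u set))) / (2 * a * pmin p * opt_gain r p (xs 1)))
           * opt_gain r p (xs 1)"
proof -
  let ?nX = "card (UNIV :: 'x set)" and ?nU = "card (UNIV :: 'u set)"
  let ?t = "tau k"
  have t1: "?t \<ge> 1"
  proof -
    obtain k' where "k = Suc k'" using k by (cases k) auto
    then have "(2::nat) \<le> 2 ^ k" by simp
    then show ?thesis unfolding tau_def by simp
  qed
  define c where "c = ln (real ?t powr b * real ?nX ^ 2 * real ?nU)"
  have nX1: "?nX \<ge> 1" and nU1: "?nU \<ge> 1" by (simp_all add: Suc_le_eq)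
  have c0: "c \<ge> 0"
  proof -
    have "1 \<le> real ?t powr b" using t1 b_gt by (intro ge_one_powr_ge_zero) auto
    moreover have "1 \<le> real ?nX ^ 2" using nX1 by simp
    moreover have "1 \<le> real ?nU" using nU1 by simp
    ultimately have "1 * 1 * 1 \<le> real ?t powr b * real ?nX ^ 2 * real ?nU"
      by (intro mult_mono) auto
    then show ?thesis unfolding c_def by (intro ln_ge_zero) simp
  qed
  have alpha_eq: "alpha a b ?nX ?nU ?t = a * c" by (simp add: alpha_def c_def)
  have pnn: "\<And>x y u. 0 \<le> p x y u" and prs: "\<And>x u. (\<Sum>y\<in>UNIV. p x y u) = 1"
    using kernel by (auto simp: is_kernel_def)
  have ple1: "p x y u \<le> 1" for x y u
  proof -
    have "p x y u \<le> (\<Sum>y\<in>UNIV. p x y u)" by (rule member_le_sum) (auto simp: pnn)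
    then show ?thesis by (simp add: prs)
  qed
  define PS where "PS = {p x y u | x y u. p x y u > 0}"
  have PSfin: "finite PS"
  proof -
    have "PS \<subseteq> (\<lambda>(x, y, u). p x y u) ` UNIV" unfolding PS_def
      by (auto intro!: rev_image_eqI[of "(_, _, _)"])
    then show ?thesis by (rule finite_subset) simp
  qed
  have "\<exists>y. p undefined y undefined > 0"
  proof (rule ccontr)
    assume "\<not> ?thesis"
    then have "\<And>y. p undefined y undefined = 0" using pnn by (meson linorder_neqE_linordered_idom not_less)
    then show False using prs[of undefined undefined] by simp
  qed
  then have PSne: "PS \<noteq> {}" unfolding PS_def by blast
  have pm_def': "pmin p = Min PS" by (simp add: pmin_def PS_def)
  have pm_pos: "pmin p > 0"
    using Min_in[OF PSfin PSne] unfolding pm_def' PS_def by auto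
  have pm_le: "p x y u > 0 \<Longrightarrow> pmin p \<le> p x y u" for x y u
    unfolding pm_def' by (rule Min_le[OF PSfin]) (auto simp: PS_def)
  have ppos: "\<And>s. s \<ge> 1 \<Longrightarrow> p (xs s) (xs (Suc s)) (us s) > 0"
    using path by (auto simp: rbmle_path_def)
  have ph_nn: "0 \<le> phat xs us x y u t" for x y u t by (simp add: phat_def)
  have ph_pos: "p x y u > 0" if "phat xs us x y u t > 0" for x y u t
  proof -
    have "cnt3 xs us x y u t \<noteq> 0"
    proof
      assume "cnt3 xs us x y u t = 0"
      then have "phat xs us x y u t = 0" by (simp add: phat_def)
      with that show False by simp
    qed
    then have "{s \<in> {1..<t}. xs s = x \<and> us s = u \<and> xs (Suc s) = y} \<noteq> {}"
      unfolding cnt3_def by (metis card.empty)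
    then obtain s where "s \<ge> 1" "xs s = x" "us s = u" "xs (Suc s) = y" by auto
    then show ?thesis using ppos[of s] by simp
  qed
  have ph_sum: "(\<Sum>y\<in>UNIV. phat xs us x y u t) = 1" if "cnt xs us x u t > 0" for x u t
  proof -
    have "(\<Sum>y\<in>UNIV. phat xs us x y u t) = real (\<Sum>y\<in>UNIV. cnt3 xs us x y u t) / real (cnt xs us x u t)"
    proof -
      have "max (cnt xs us x u t) 1 = cnt xs us x u t" using that by simp
      then show ?thesis by (simp add: phat_def sum_divide_distrib)
    qed
    then show ?thesis using that by (simp add: cnt_sum)
  qed
  have pTheta: "p \<in> Theta p" using pnn ple1 prs by (auto simp: Theta_def)
  have conf: "\<bar>p x y u - phat xs us x y u ?t\<bar> \<le> sqrt (c / real (cnt xs us x u ?t))"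
    if "cnt xs us x u ?t > 0" for x y u
    using G1 t1 that unfolding conf_set_def c_def by auto
  define J where "J = opt_gain r p (xs 1)"
  have J_eq: "avg_reward r p \<pi>s (xs 1) = J" using opt by (simp add: opt_policies_def J_def)
  have J_pos: "J > 0" using avg_bounds[of p r \<pi>s "xs 1"] pnn prs rew J_eq by auto
  define KLs where "KLs \<theta> = (\<Sum>x\<in>UNIV. \<Sum>u\<in>UNIV. real (cnt xs us x u ?t)
               * KL (\<lambda>y. phat xs us x y u ?t) (\<lambda>y. \<theta> x y u))" for \<theta> :: "'x \<Rightarrow> 'x \<Rightarrow> 'u \<Rightarrow> real"
  define S where "S = {alpha a b ?nX ?nU ?t * avg_reward r \<theta> \<pi>s (xs 1) - KLs \<theta>
         | \<theta>. \<theta> \<in> Theta p \<and> (\<forall>x y u. phat xs us x y u ?t > 0 \<longrightarrow> \<theta> x y u > 0)}"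
  have idx: "rb_index r p xs us a b k \<pi>s = Sup S"
    unfolding rb_index_def S_def KLs_def ..
  have mem: "alpha a b ?nX ?nU ?t * J - KLs p \<in> S"
    using pTheta ph_pos J_eq unfolding S_def by (intro CollectI exI[of _ p]) auto
  have bdd: "bdd_above S"
  proof (rule bdd_aboveI)
    fix z assume "z \<in> S"
    then obtain \<theta> where th: "\<theta> \<in> Theta p" and thp: "\<forall>x y u. phat xs us x y u ?t > 0 \<longrightarrow> \<theta> x y u > 0"
      and z: "z = alpha a b ?nX ?nU ?t * avg_reward r \<theta> \<pi>s (xs 1) - KLs \<theta>"
      unfolding S_def by blast
    have thn: "\<And>x y u. 0 \<le> \<theta> x y u" and th1: "\<And>x y u. \<theta> x y u \<le> 1"
      and ths: "\<And>x u. (\<Sum>y\<in>UNIV. \<theta> x y u) = 1" using th by (auto simp: Theta_def)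
    have "\<bar>avg_reward r \<theta> \<pi>s (xs 1)\<bar> \<le> 1" using avg_bounds[of \<theta> r \<pi>s "xs 1"] thn ths rew by auto
    then have "alpha a b ?nX ?nU ?t * avg_reward r \<theta> \<pi>s (xs 1) \<le> \<bar>alpha a b ?nX ?nU ?t\<bar>"
      proof -
        let ?al = "alpha a b ?nX ?nU ?t" and ?av = "avg_reward r \<theta> \<pi>s (xs 1)"
        have "?al * ?av \<le> \<bar>?al\<bar> * \<bar>?av\<bar>" by (metis abs_ge_self abs_mult)
        also have "\<dots> \<le> \<bar>?al\<bar>" by (rule mult_left_le) (use \<open>\<bar>?av\<bar> \<le> 1\<close> in auto)
        finally show ?thesis .
      qed
    moreover have "- KLs \<theta> \<le> (\<Sum>x\<in>UNIV. \<Sum>u\<in>UNIV. real (cnt xs us x u ?t) * real ?nX)"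
    proof -
      have "(\<Sum>x\<in>UNIV. \<Sum>u\<in>UNIV. real (cnt xs us x u ?t) * (- real ?nX)) \<le> KLs \<theta>"
        unfolding KLs_def
        apply (intro sum_mono mult_left_mono KL_lower)
        using ph_nn thp th1 by auto
      then show ?thesis by (simp add: sum_negf)
    qed
    ultimately show "z \<le> \<bar>alpha a b ?nX ?nU ?t\<bar> + (\<Sum>x\<in>UNIV. \<Sum>u\<in>UNIV. real (cnt xs us x u ?t) * real ?nX)"
      using z by linarith
  qed
  define B where "B = (if ?nX = 1 then 0 else real ?nX * c / pmin p)"
  have row: "real (cnt xs us x u ?t) * KL (\<lambda>y. phat xs us x y u ?t) (\<lambda>y. p x y u) \<le> B" for x u
  proof (cases "cnt xs us x u ?t = 0")
    case True
    then show ?thesis using c0 pm_pos by (simp add: B_def)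
  next
    case False
    let ?n = "cnt xs us x u ?t"
    let ?ph = "\<lambda>y. phat xs us x y u ?t"
    have npos: "?n > 0" using False by simp
    have KLle: "KL ?ph (\<lambda>y. p x y u) \<le> (\<Sum>y\<in>UNIV. (if p x y u > 0 then (?ph y - p x y u)^2 / p x y u else 0))"
      by (rule KL_upper) (auto simp: ph_nn ph_sum[OF npos] prs pnn ph_pos)
    have trm: "(if p x y u > 0 then (?ph y - p x y u)^2 / p x y u else 0) \<le> (c / real ?n) / pmin p" for y
    proof (cases "p x y u > 0")
      case True
      have "(?ph y - p x y u)^2 = \<bar>p x y u - ?ph y\<bar>^2" by (simp add: power2_eq_square algebra_simps)
      also have "\<dots> \<le> (sqrt (c / real ?n))^2"
        using conf[OF npos, of y] by (intro power_mono) auto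
      also have "\<dots> = c / real ?n" using c0 by simp
      finally have sq: "(?ph y - p x y u)^2 \<le> c / real ?n" .
      have "(?ph y - p x y u)^2 / p x y u \<le> (c / real ?n) / p x y u"
        using sq True by (intro divide_right_mono) auto
      also have "\<dots> \<le> (c / real ?n) / pmin p"
        using c0 pm_pos pm_le[OF True] by (intro divide_left_mono) auto
      finally show ?thesis using True by simp
    next
      case False
      then show ?thesis using c0 pm_pos by simp
    qed
    show ?thesis
    proof (cases "?nX = 1")
      case True
      then obtain y0 :: 'x where U: "UNIV = {y0}" using card_1_singletonE by blast
      have "?ph y0 = 1" using ph_sum[OF npos] unfolding U by simp
      moreover have "p x y0 u = 1" using prs[of x u] unfolding U by simp
      moreover have "y = y0" for y :: 'x using U by (metis UNIV_I singletonD)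
      ultimately have "\<forall>y. ?ph y = p x y u" by metis
      then have "(\<Sum>y\<in>UNIV. (if p x y u > 0 then (?ph y - p x y u)^2 / p x y u else 0)) = 0"
        by (intro sum.neutral ballI) simp
      then show ?thesis using KLle True by (simp add: B_def mult_nonneg_nonpos)
    next
      case nX: False
      have "KL ?ph (\<lambda>y. p x y u) \<le> (\<Sum>y\<in>(UNIV::'x set). (c / real ?n) / pmin p)"
        using KLle trm by (meson order_trans sum_mono)
      also have "\<dots> = real ?nX * c / (real ?n * pmin p)" by simp
      finally have "real ?n * KL ?ph (\<lambda>y. p x y u) \<le> real ?n * (real ?nX * c / (real ?n * pmin p))"
        using npos by (intro mult_left_mono) auto
      also have "\<dots> = real ?nX * c / pmin p" using npos by (simp add: field_simps)
      finally show ?thesis using nX by (simp add: B_def)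
    qed
  qed
  have "KLs p \<le> (\<Sum>x\<in>(UNIV::'x set). \<Sum>u\<in>(UNIV::'u set). B)"
    unfolding KLs_def by (intro sum_mono row)
  also have "\<dots> = real ?nX * real ?nU * B" by simp
  also have "\<dots> \<le> real ?nX ^ 3 * real ?nU * c / (2 * pmin p)"
  proof (cases "?nX = 1")
    case True then show ?thesis using c0 pm_pos by (simp add: B_def)
  next
    case False
    then have "real ?nX \<ge> 2" using nX1 by linarith
    then have "2 * real ?nX ^ 2 \<le> real ?nX ^ 3" by (simp add: power2_eq_square power3_eq_cube mult_right_mono)
    then have "2 * real ?nX ^ 2 * (real ?nU * c) \<le> real ?nX ^ 3 * (real ?nU * c)"
      using c0 by (intro mult_right_mono) auto
    then have le: "2 * real ?nX ^ 2 * (real ?nU * c) / (2 * pmin p) \<le> real ?nX ^ 3 * (real ?nU * c) / (2 * pmin p)"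
      using pm_pos by (intro divide_right_mono) auto
    have "real ?nX * real ?nU * B = 2 * real ?nX ^ 2 * (real ?nU * c) / (2 * pmin p)"
      using False pm_pos by (simp add: B_def power2_eq_square)
    then show ?thesis using le by (simp add: mult.assoc)
  qed
  finally have KLb: "KLs p \<le> real ?nX ^ 3 * real ?nU * c / (2 * pmin p)" .
  have "alpha a b ?nX ?nU ?t * (1 - real ?nX ^ 3 * real ?nU / (2 * a * pmin p * J)) * J
        = a * c * J - real ?nX ^ 3 * real ?nU * c / (2 * pmin p)"
  proof -
    let ?K = "real ?nX ^ 3 * real ?nU"
    have "a * c * (1 - ?K / (2 * a * pmin p * J)) * J = a * c * J - a * c * J * (?K / (2 * a * pmin p * J))"
      by (simp add: algebra_simps)
    also have "a * c * J * (?K / (2 * a * pmin p * J)) = ?K * c / (2 * pmin p)"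
      using a_pos pm_pos J_pos by (simp add: field_simps)
    finally show ?thesis by (simp add: alpha_eq)
  qed
  also have "\<dots> \<le> alpha a b ?nX ?nU ?t * J - KLs p" using KLb by (simp add: alpha_eq)
  also have "\<dots> \<le> Sup S" by (rule cSup_upper[OF mem bdd])
  finally show ?thesis by (simp add: idx J_def)
qed

end
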